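(* Let $G$ be a countable multiplicatively written Abelian group, $\phi$ a height on $G$, $\alpha\in G$, and let $K\subseteq(0,\infty)$ be uncountable such that for every $t\in K$ the infimum in the definition of $\phi_t(\alpha)$ is attained. Then $K$ is uniform if and only if there exists $(\alpha_1,\alpha_2,\ldots)\in G^\infty$ such that $\alpha=\prod_{n=1}^\infty\alpha_n$ and $\phi_t(\alpha)=(\sum_{n=1}^\infty\phi(\alpha_n)^t)^{1/t}$ for all $t\in K$.
   Context: A height on $G$ is a map $\phi:G\to[0,\infty)$ with $\phi(e)=0$ and $\phi(\beta)=\phi(\beta^{-1})$. $G^\infty$ is the set of sequences in $G$ with all but finitely many terms equal to the identity. $\mathbb R^\infty$ is the set of finitely supported real sequences, $\|\mathbf x\|_t=(\sum_n|x_n|^t)^{1/t}$. $\phi_t(\alpha)=\inf\{(\sum_n\phi(\alpha_n)^t)^{1/t}:(\alpha_n)\in G^\infty,\ \prod_n\alpha_n=\alpha\}$, and the infimum is attained if some such sequence achieves it. A set $K\subseteq(0,\infty)$ is uniform if there exists $\mathbf x\in\mathbb R^\infty$ with $\phi_t(\alpha)=\|\mathbf x\|_t$ for all $t\in K$. *)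

theory Defs
  imports "HOL-Algebra.Algebra" "HOL-Library.Countable_Set"
begin

definition is_height :: "('a, 'b) monoid_scheme \<Rightarrow> ('a \<Rightarrow> real) \<Rightarrow> bool" where
  "is_height G \<phi> \<longleftrightarrow> (\<forall>b\<in>carrier G. \<phi> b \<ge> 0) \<and> \<phi> \<one>\<^bsub>G\<^esub> = 0
     \<and> (\<forall>b\<in>carrier G. \<phi> b = \<phi> (inv\<^bsub>G\<^esub> b))"

definition fin_seqs :: "('a, 'b) monoid_scheme \<Rightarrow> (nat \<Rightarrow> 'a) set" where
  "fin_seqs G = {f. (\<forall>n. f n \<in> carrier G) \<and> finite {n. f n \<noteq> \<one>\<^bsub>G\<^esub>}}"

definition seq_prod :: "('a, 'b) monoid_scheme \<Rightarrow> (nat \<Rightarrow> 'a) \<Rightarrow> 'a" where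
  "seq_prod G f = finprod G f {n. f n \<noteq> \<one>\<^bsub>G\<^esub>}"

text \<open>(sum_n phi(a_n)^t)^(1/t) for a sequence in G^infinity (terms equal to the
  identity contribute phi(1)^t = 0).\<close>
definition seq_val :: "('a, 'b) monoid_scheme \<Rightarrow> ('a \<Rightarrow> real) \<Rightarrow> real \<Rightarrow> (nat \<Rightarrow> 'a) \<Rightarrow> real" where
  "seq_val G \<phi> t f = (\<Sum>n\<in>{n. f n \<noteq> \<one>\<^bsub>G\<^esub>}. \<phi> (f n) powr t) powr (1 / t)"

definition phi_t :: "('a, 'b) monoid_scheme \<Rightarrow> ('a \<Rightarrow> real) \<Rightarrow> real \<Rightarrow> 'a \<Rightarrow> real" where
  "phi_t G \<phi> t a = Inf {seq_val G \<phi> t f | f. f \<in> fin_seqs G \<and> seq_prod G f = a}"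

definition inf_attained :: "('a, 'b) monoid_scheme \<Rightarrow> ('a \<Rightarrow> real) \<Rightarrow> real \<Rightarrow> 'a \<Rightarrow> bool" where
  "inf_attained G \<phi> t a \<longleftrightarrow>
     (\<exists>f\<in>fin_seqs G. seq_prod G f = a \<and> seq_val G \<phi> t f = phi_t G \<phi> t a)"

definition fin_real_seqs :: "(nat \<Rightarrow> real) set" where
  "fin_real_seqs = {x. finite {n. x n \<noteq> 0}}"

definition tnorm :: "real \<Rightarrow> (nat \<Rightarrow> real) \<Rightarrow> real" where
  "tnorm t x = (\<Sum>n\<in>{n. x n \<noteq> 0}. \<bar>x n\<bar> powr t) powr (1 / t)"

definition uniform_set :: "('a, 'b) monoid_scheme \<Rightarrow> ('a \<Rightarrow> real) \<Rightarrow> 'a \<Rightarrow> real set \<Rightarrow> bool" where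
  "uniform_set G \<phi> a K \<longleftrightarrow> (\<exists>x\<in>fin_real_seqs. \<forall>t\<in>K. phi_t G \<phi> t a = tnorm t x)"

end

theory Submission
  imports Defs
begin

lemma rolle_zeros:
  fixes h h' :: "real \<Rightarrow> real"
  assumes der: "\<And>x. (h has_real_derivative h' x) (at x)"
  shows "finite Z \<Longrightarrow> card Z = Suc n \<Longrightarrow> (\<forall>z\<in>Z. h z = 0) \<Longrightarrow>
    \<exists>Z'. finite Z' \<and> card Z' = n \<and> Z' \<subseteq> {..<Max Z} \<and> (\<forall>z\<in>Z'. h' z = 0)"
proof (induction n arbitrary: Z)
  case 0
  then show ?case by auto
next
  case (Suc n)
  define m where "m = Max Z"
  have ne: "Z \<noteq> {}" using Suc.prems by auto
  have mZ: "m \<in> Z" using Max_in[OF Suc.prems(1) ne] m_def by simp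
  define Z0 where "Z0 = Z - {m}"
  have fZ0: "finite Z0" "card Z0 = Suc n" using Suc.prems mZ by (auto simp: Z0_def)
  have h0: "\<forall>z\<in>Z0. h z = 0" using Suc.prems by (auto simp: Z0_def)
  obtain Z' where Z': "finite Z'" "card Z' = n" "Z' \<subseteq> {..<Max Z0}" "\<forall>z\<in>Z'. h' z = 0"
    using Suc.IH[OF fZ0 h0] by blast
  have ne0: "Z0 \<noteq> {}" using fZ0 by auto
  have m0: "Max Z0 \<in> Z0" using Max_in[OF fZ0(1) ne0] .
  have lt: "Max Z0 < m"
    using m0 Suc.prems(1) m_def Z0_def by (metis DiffD1 DiffD2 Max_ge insertI1 order_le_less)
  have "\<exists>w. Max Z0 < w \<and> w < m \<and> DERIV h w :> 0"
  proof (rule Rolle[OF lt])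
    show "h (Max Z0) = h m" using h0 m0 mZ Suc.prems(3) by auto
    show "continuous_on {Max Z0..m} h"
      using der by (meson DERIV_isCont continuous_at_imp_continuous_on)
    show "\<And>x. Max Z0 < x \<Longrightarrow> x < m \<Longrightarrow> h differentiable at x"
      using der real_differentiable_def by blast
  qed
  then obtain w where w: "Max Z0 < w" "w < m" "DERIV h w :> 0" by blast
  have hw: "h' w = 0" using DERIV_unique[OF der w(3)] .
  show ?case
  proof (intro exI[of _ "insert w Z'"] conjI)
    show "finite (insert w Z')" using Z' by simp
    have "w \<notin> Z'" using Z'(3) w(1) by auto
    then show "card (insert w Z') = Suc n" using Z' by simp
    show "insert w Z' \<subseteq> {..<Max Z}" using Z'(3) w lt m_def by auto
    show "\<forall>z\<in>insert w Z'. h' z = 0" using Z'(4) hw by auto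
  qed
qed

lemma exp_sum_zero:
  fixes c :: "real \<Rightarrow> real"
  shows "finite L \<Longrightarrow> finite Z \<Longrightarrow> card L \<le> card Z \<Longrightarrow>
    (\<forall>t\<in>Z. (\<Sum>l\<in>L. c l * exp (l * t)) = 0) \<Longrightarrow> \<forall>l\<in>L. c l = 0"
proof (induction L arbitrary: c Z rule: finite_induct)
  case empty
  then show ?case by simp
next
  case (insert l0 L)
  obtain n where n: "card Z = Suc n" and nL: "card L \<le> n"
    using insert by (metis card_insert_disjoint not_less_eq_eq Suc_le_D)
  define h where "h t = (\<Sum>l\<in>insert l0 L. c l * exp ((l - l0) * t))" for t
  define h' where "h' t = (\<Sum>l\<in>L. c l * (l - l0) * exp ((l - l0) * t))" for t
  have hsplit: "h t = c l0 + (\<Sum>l\<in>L. c l * exp ((l - l0) * t))" for t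
    using insert(1,2) by (simp add: h_def)
  have der: "(h has_real_derivative h' x) (at x)" for x
    unfolding hsplit[abs_def] h'_def
    by (auto intro!: derivative_eq_intros sum.cong simp: algebra_simps)
  have hexp: "h t = exp (- l0 * t) * (\<Sum>l\<in>insert l0 L. c l * exp (l * t))" for t
    unfolding h_def sum_distrib_left
    by (rule sum.cong) (auto simp: algebra_simps exp_add[symmetric])
  have h'exp: "h' t = exp (- l0 * t) * (\<Sum>l\<in>L. (c l * (l - l0)) * exp (l * t))" for t
    unfolding h'_def sum_distrib_left
    by (rule sum.cong) (auto simp: algebra_simps exp_add[symmetric])
  have hz: "\<forall>z\<in>Z. h z = 0" using insert(6) hexp by simp
  obtain Z' where Z': "finite Z'" "card Z' = n" "\<forall>z\<in>Z'. h' z = 0"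
    using rolle_zeros[OF der insert(4) n hz] by blast
  have "\<forall>t\<in>Z'. (\<Sum>l\<in>L. (c l * (l - l0)) * exp (l * t)) = 0"
    using Z'(3) h'exp by simp
  then have cL: "\<forall>l\<in>L. c l * (l - l0) = 0"
    using insert.IH[OF Z'(1), of "\<lambda>l. c l * (l - l0)"] Z'(2) nL by simp
  then have cL': "\<forall>l\<in>L. c l = 0" using insert(2) by auto
  obtain z where z: "z \<in> Z" using n by fastforce
  have "(\<Sum>l\<in>insert l0 L. c l * exp (l * z)) = 0" using insert(6) z by blast
  then have "c l0 * exp (l0 * z) = 0" using insert(1,2) cL' by simp
  then have "c l0 = 0" by simp
  then show ?case using cL' by simp
qed

lemma powr_sum_zero:
  fixes c :: "real \<Rightarrow> real"
  assumes "finite V" "V \<subseteq> {0<..}" "finite Z" "card V \<le> card Z"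
    "\<forall>t\<in>Z. (\<Sum>v\<in>V. c v * v powr t) = 0"
  shows "\<forall>v\<in>V. c v = 0"
proof -
  have inj: "inj_on ln V" using assms(2) by (intro inj_onI) (auto dest: ln_inj_iff[THEN iffD1])
  have eq: "(\<Sum>l\<in>ln ` V. c (exp l) * exp (l * t)) = (\<Sum>v\<in>V. c v * v powr t)" for t
    using assms(2) by (subst sum.reindex[OF inj]) (auto intro!: sum.cong simp: powr_def mult.commute)
  have "\<forall>l\<in>ln ` V. c (exp l) = 0"
    by (rule exp_sum_zero) (use assms inj eq card_image[OF inj] in auto)
  then show ?thesis using assms(2) by (metis exp_ln greaterThan_iff image_eqI subsetD)
qed

lemma group_powr:
  fixes g :: "nat \<Rightarrow> real"
  assumes "finite S" "finite V" "V \<subseteq> {0<..}" "g ` S \<inter> {0<..} \<subseteq> V" "\<forall>n\<in>S. g n \<ge> 0"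
  shows "(\<Sum>n\<in>S. g n powr t) = (\<Sum>v\<in>V. real (card {n\<in>S. g n = v}) * v powr t)"
proof -
  have "(\<Sum>v\<in>V. real (card {n\<in>S. g n = v}) * v powr t)
      = (\<Sum>v\<in>V. \<Sum>n\<in>{n\<in>{n\<in>S. g n \<in> V}. g n = v}. g n powr t)"
  proof (rule sum.cong)
    fix v assume v: "v \<in> V"
    have se: "{n\<in>{n\<in>S. g n \<in> V}. g n = v} = {n\<in>S. g n = v}" using v by auto
    have "(\<Sum>n\<in>{n\<in>S. g n = v}. g n powr t) = (\<Sum>n\<in>{n\<in>S. g n = v}. v powr t)"
      by (rule sum.cong) auto
    then show "real (card {n\<in>S. g n = v}) * v powr t = (\<Sum>n\<in>{n\<in>{n\<in>S. g n \<in> V}. g n = v}. g n powr t)"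
      unfolding se by simp
  qed simp
  also have "\<dots> = (\<Sum>n\<in>{n\<in>S. g n \<in> V}. g n powr t)"
    by (rule sum.group) (use assms in auto)
  also have "\<dots> = (\<Sum>n\<in>S. g n powr t)"
  proof (rule sum.mono_neutral_left)
    show "\<forall>i\<in>S - {n \<in> S. g n \<in> V}. g i powr t = 0"
    proof
      fix i assume i: "i \<in> S - {n \<in> S. g n \<in> V}"
      then have "g i = 0" using assms(4,5) by force
      then show "g i powr t = 0" by simp
    qed
  qed (use assms in auto)
  finally show ?thesis by simp
qed

lemma countable_fin_seqs:
  assumes "countable (carrier G)"
  shows "countable (fin_seqs G)"
proof -
  define k where "k f = (SOME k. {n. f n \<noteq> \<one>\<^bsub>G\<^esub>} \<subseteq> {..<k})" for f :: "nat \<Rightarrow> 'a"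
  have k: "{n. f n \<noteq> \<one>\<^bsub>G\<^esub>} \<subseteq> {..<k f}" if "f \<in> fin_seqs G" for f
    unfolding k_def by (rule someI_ex) (use that finite_nat_bounded in \<open>auto simp: fin_seqs_def\<close>)
  define enc where "enc f = map f [0..<k f]" for f
  have "inj_on enc (fin_seqs G)"
  proof (rule inj_onI)
    fix f g assume f: "f \<in> fin_seqs G" and g: "g \<in> fin_seqs G" and e: "enc f = enc g"
    then have len: "k f = k g" unfolding enc_def by (metis length_map length_upt minus_nat.diff_0)
    show "f = g"
    proof
      fix n show "f n = g n"
      proof (cases "n < k f")
        case True
        then show ?thesis using e len unfolding enc_def
          by (metis add_0 diff_zero nth_map_upt)
      next
        case False
        have "f n = \<one>\<^bsub>G\<^esub>" using k[OF f] False by auto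
        moreover have "g n = \<one>\<^bsub>G\<^esub>" using k[OF g] False len by auto
        ultimately show ?thesis by simp
      qed
    qed
  qed
  moreover have "enc ` fin_seqs G \<subseteq> lists (carrier G)"
    by (auto simp: enc_def fin_seqs_def)
  then have "countable (enc ` fin_seqs G)"
    using assms countable_lists countable_subset by blast
  ultimately show ?thesis using countable_image_inj_on by blast
qed

lemma powr_inv_eq:
  fixes A B t :: real
  assumes "A \<ge> 0" "B \<ge> 0" "t > 0" "A powr (1/t) = B powr (1/t)"
  shows "A = B"
proof -
  have e: "(A powr (1/t)) powr t = (B powr (1/t)) powr t" using assms(4) by simp
  have "1/t*t = 1" using assms(3) by simp
  then have "A powr 1 = B powr 1" using e unfolding powr_powr by simp
  then show ?thesis using assms by (simp add: powr_one)
qed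

theorem lemma3p4:
  fixes G (structure) and \<phi> :: "'a \<Rightarrow> real" and \<alpha> :: 'a and K :: "real set"
  assumes "comm_group G" and "countable (carrier G)"
    and "is_height G \<phi>" and "\<alpha> \<in> carrier G"
    and "K \<subseteq> {0<..}" and "uncountable K"
    and "\<forall>t\<in>K. inf_attained G \<phi> t \<alpha>"
  shows "uniform_set G \<phi> \<alpha> K \<longleftrightarrow>
    (\<exists>f\<in>fin_seqs G. seq_prod G f = \<alpha> \<and> (\<forall>t\<in>K. phi_t G \<phi> t \<alpha> = seq_val G \<phi> t f))"
proof
  have phi_nn: "\<And>b. b \<in> carrier G \<Longrightarrow> \<phi> b \<ge> 0" and phi1: "\<phi> \<one> = 0"
    using assms(3) by (auto simp: is_height_def)
  {
    assume "uniform_set G \<phi> \<alpha> K"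
    then obtain x where x: "x \<in> fin_real_seqs" and xK: "\<forall>t\<in>K. phi_t G \<phi> t \<alpha> = tnorm t x"
      by (auto simp: uniform_set_def)
    define P where "P t f \<longleftrightarrow> f \<in> fin_seqs G \<and> seq_prod G f = \<alpha> \<and> seq_val G \<phi> t f = phi_t G \<phi> t \<alpha>" for t f
    define F where "F t = (SOME f. P t f)" for t
    have FK: "P t (F t)" if "t \<in> K" for t
    proof -
      have "\<exists>f. P t f" using assms(7) that by (auto simp: inf_attained_def P_def)
      then show ?thesis unfolding F_def by (rule someI_ex)
    qed
    have cF: "countable (F ` K)"
      using countable_fin_seqs[OF assms(2)] FK by (auto simp: P_def intro: countable_subset)
    have "\<exists>f\<in>F ` K. uncountable {t\<in>K. F t = f}"
    proof (rule ccontr)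
      assume "\<not> ?thesis"
      then have "countable (\<Union>f\<in>F ` K. {t\<in>K. F t = f})" using cF
        by (intro countable_UN) auto
      moreover have "(\<Union>f\<in>F ` K. {t\<in>K. F t = f}) = K" by auto
      ultimately show False using assms(6) by simp
    qed
    then obtain f where fF: "f \<in> F ` K" and unc: "uncountable {t\<in>K. F t = f}" by blast
    obtain t0 where t0: "t0 \<in> K" "f = F t0" using fF by auto
    have f: "f \<in> fin_seqs G" "seq_prod G f = \<alpha>" using FK[OF t0(1)] t0 by (auto simp: P_def)
    define S1 where "S1 = {n. f n \<noteq> \<one>}"
    define S2 where "S2 = {n. x n \<noteq> 0}"
    define g1 where "g1 n = \<phi> (f n)" for n
    define g2 where "g2 n = \<bar>x n\<bar>" for n
    have fS1: "finite S1" using f by (simp add: fin_seqs_def S1_def)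
    have fS2: "finite S2" using x by (simp add: fin_real_seqs_def S2_def)
    have g1nn: "\<forall>n\<in>S1. g1 n \<ge> 0" using f phi_nn by (auto simp: g1_def fin_seqs_def)
    have g2nn: "\<forall>n\<in>S2. g2 n \<ge> 0" by (auto simp: g2_def)
    define V where "V = (g1 ` S1 \<union> g2 ` S2) \<inter> {0<..}"
    have fV: "finite V" using fS1 fS2 by (simp add: V_def)
    have Vpos: "V \<subseteq> {0<..}" by (auto simp: V_def)
    define c where "c v = real (card {n\<in>S1. g1 n = v}) - real (card {n\<in>S2. g2 n = v})" for v
    have D: "(\<Sum>n\<in>S1. g1 n powr t) - (\<Sum>n\<in>S2. g2 n powr t) = (\<Sum>v\<in>V. c v * v powr t)" for t
    proof -
      have "(\<Sum>n\<in>S1. g1 n powr t) = (\<Sum>v\<in>V. real (card {n\<in>S1. g1 n = v}) * v powr t)"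
        by (rule group_powr) (use fS1 fV Vpos g1nn in \<open>auto simp: V_def\<close>)
      moreover have "(\<Sum>n\<in>S2. g2 n powr t) = (\<Sum>v\<in>V. real (card {n\<in>S2. g2 n = v}) * v powr t)"
        by (rule group_powr) (use fS2 fV Vpos g2nn in \<open>auto simp: V_def\<close>)
      ultimately show ?thesis by (simp add: c_def left_diff_distrib sum_subtractf)
    qed
    have sv: "seq_val G \<phi> t f = (\<Sum>n\<in>S1. g1 n powr t) powr (1/t)" for t
      by (simp add: seq_val_def S1_def g1_def)
    have tn: "tnorm t x = (\<Sum>n\<in>S2. g2 n powr t) powr (1/t)" for t
      by (simp add: tnorm_def S2_def g2_def)
    have zero: "(\<Sum>v\<in>V. c v * v powr t) = 0" if "t \<in> {t\<in>K. F t = f}" for t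
    proof -
      have tK: "t \<in> K" "t > 0" using that assms(5) by auto
      have "seq_val G \<phi> t f = tnorm t x"
        using FK[OF tK(1)] that xK tK(1) by (auto simp: P_def)
      then have "(\<Sum>n\<in>S1. g1 n powr t) = (\<Sum>n\<in>S2. g2 n powr t)"
        unfolding sv tn by (rule powr_inv_eq[rotated 3]) (auto intro: sum_nonneg simp: tK)
      then show ?thesis using D[of t] by simp
    qed
    have "infinite {t\<in>K. F t = f}" using unc countable_finite by blast
    then obtain Z where Z: "finite Z" "card Z = card V" "Z \<subseteq> {t\<in>K. F t = f}"
      using infinite_arbitrarily_large by blast
    have c0: "\<forall>v\<in>V. c v = 0"
      by (rule powr_sum_zero[OF fV Vpos Z(1)]) (use Z zero in auto)
    have "\<forall>t\<in>K. phi_t G \<phi> t \<alpha> = seq_val G \<phi> t f"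
    proof
      fix t assume tK: "t \<in> K"
      have "(\<Sum>n\<in>S1. g1 n powr t) = (\<Sum>n\<in>S2. g2 n powr t)" using D[of t] c0 by simp
      then show "phi_t G \<phi> t \<alpha> = seq_val G \<phi> t f" using xK tK unfolding sv tn by simp
    qed
    then show "\<exists>f\<in>fin_seqs G. seq_prod G f = \<alpha> \<and> (\<forall>t\<in>K. phi_t G \<phi> t \<alpha> = seq_val G \<phi> t f)"
      using f by blast
  }
  {
    assume "\<exists>f\<in>fin_seqs G. seq_prod G f = \<alpha> \<and> (\<forall>t\<in>K. phi_t G \<phi> t \<alpha> = seq_val G \<phi> t f)"
    then obtain f where f: "f \<in> fin_seqs G" and fK: "\<forall>t\<in>K. phi_t G \<phi> t \<alpha> = seq_val G \<phi> t f"
      by blast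
    define x where "x n = \<phi> (f n)" for n
    have fS: "finite {n. f n \<noteq> \<one>}" using f by (simp add: fin_seqs_def)
    have sub: "{n. x n \<noteq> 0} \<subseteq> {n. f n \<noteq> \<one>}" using phi1 by (auto simp: x_def)
    have xr: "x \<in> fin_real_seqs" using finite_subset[OF sub fS] by (simp add: fin_real_seqs_def)
    have "tnorm t x = seq_val G \<phi> t f" for t
    proof -
      have "(\<Sum>n\<in>{n. x n \<noteq> 0}. \<bar>x n\<bar> powr t) = (\<Sum>n\<in>{n. x n \<noteq> 0}. \<phi> (f n) powr t)"
        using f phi_nn by (intro sum.cong) (auto simp: x_def fin_seqs_def)
      also have "\<dots> = (\<Sum>n\<in>{n. f n \<noteq> \<one>}. \<phi> (f n) powr t)"
        by (rule sum.mono_neutral_left[OF fS sub]) (auto simp: x_def)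
      finally show ?thesis by (simp add: tnorm_def seq_val_def)
    qed
    then show "uniform_set G \<phi> \<alpha> K" using xr fK unfolding uniform_set_def by metis
  }
qed

end
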